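(* Let $G=(V,E)$ be a graph and $P:=\{k\in V : \deg_G(k)=|V|-1\}$. Then (i) the set of vertices of $\{X\in\mathbb{S}^V_+ : \operatorname{tr}(X)=1,\ X_{ij}=0\ \forall ij\in E\}$ is $\{e_ke_k^{\mathsf T} : k\in P\}$; (ii) the set of vertices of $\{X\in\mathbb{S}^V_+ : \operatorname{tr}(X)=1,\ X_{ij}=0\ \forall ij\in E,\ X_{ij}\ge 0\ \forall ij\in\binom{V}{2}\setminus E\}$ is $\{e_ke_k^{\mathsf T} : k\in V\}$; (iii) the set of vertices of $\{X\in\mathbb{S}^V_+ : \operatorname{tr}(X)=1,\ X_{ij}\le 0\ \forall ij\in E\}$ is $\{e_ke_k^{\mathsf T} : k\in P\}$.
   Context: $\mathbb{S}^V_+$ denotes the real symmetric positive semidefinite matrices indexed by $V$, with trace inner product; $e_k$ are standard basis vectors of $\mathbb{R}^V$. For a convex set $\mathcal{C}$ in a finite-dimensional space $\mathbb{E}$ and $\bar x\in\mathcal{C}$, the normal cone is $N_{\mathcal{C}}(\bar x):=\{c : \langle c,x\rangle\le\langle c,\bar x\rangle\ \forall x\in\mathcal{C}\}$; $\bar x$ is a vertex if $\dim N_{\mathcal{C}}(\bar x)=\dim\mathbb{E}$ (here $\mathbb{E}=\mathbb{S}^V$). *)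

theory Defs
  imports "HOL-Analysis.Analysis"
begin

definition sym_mats :: "(real^'v^'v) set" where
  "sym_mats = {X. transpose X = X}"

definition psd :: "real^'v^'v \<Rightarrow> bool" where
  "psd X \<longleftrightarrow> transpose X = X \<and> (\<forall>x. 0 \<le> x \<bullet> (X *v x))"

definition tr_inner :: "real^'v^'v \<Rightarrow> real^'v^'v \<Rightarrow> real" where
  "tr_inner C X = trace (C ** X)"

definition normal_cone :: "(real^'v^'v) set \<Rightarrow> real^'v^'v \<Rightarrow> (real^'v^'v) set" where
  "normal_cone C Xb = {Cm \<in> sym_mats. \<forall>X\<in>C. tr_inner Cm X \<le> tr_inner Cm Xb}"

definition is_vertex :: "(real^'v^'v) set \<Rightarrow> real^'v^'v \<Rightarrow> bool" where
  "is_vertex C Xb \<longleftrightarrow> Xb \<in> C \<and> aff_dim (normal_cone C Xb) = aff_dim (sym_mats :: (real^'v^'v) set)"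

definition vertices :: "(real^'v^'v) set \<Rightarrow> (real^'v^'v) set" where
  "vertices C = {X. is_vertex C X}"

definition unit_proj :: "'v \<Rightarrow> real^'v^'v" where
  "unit_proj k = (\<chi> i j. if i = k \<and> j = k then 1 else 0)"

text \<open>Simple graph on vertex set UNIV::'v set, edges are 2-element subsets.\<close>
definition simple_graph :: "'v set set \<Rightarrow> bool" where
  "simple_graph E \<longleftrightarrow> (\<forall>e\<in>E. \<exists>i j. i \<noteq> j \<and> e = {i, j})"

definition degree :: "'v set set \<Rightarrow> 'v \<Rightarrow> nat" where
  "degree E k = card {j. {k, j} \<in> E}"

end

theory Submission
  imports Defs
begin


lemma qform: "x \<bullet> (Y *v x) = (\<Sum>a\<in>UNIV. \<Sum>b\<in>UNIV. x$a * Y$a$b * x$b)"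
  by (simp add: inner_vec_def matrix_vector_mult_def sum_distrib_left mult.assoc mult.commute mult.left_commute)

lemma sum_if_mult: fixes f :: "'a::finite \<Rightarrow> real" shows "(\<Sum>i\<in>UNIV. f i * (if i = a then p else 0)) = f a * (p::real)"
proof -
  have "(\<Sum>i\<in>UNIV. f i * (if i = a then p else 0)) = (\<Sum>i\<in>UNIV. if i = a then f a * p else 0)"
    by (rule sum.cong) auto
  then show ?thesis by simp
qed

lemma sum_if_mult': fixes f :: "'a::finite \<Rightarrow> real" shows "(\<Sum>i\<in>UNIV. (if i = a then p else 0) * f i) = p * f a"
  using sum_if_mult[of f a p] by (simp add: mult.commute)

lemma qform2:
  fixes Y :: "real^'v::finite^'v"
  assumes "a \<noteq> b"
  shows "(axis a p + axis b q) \<bullet> (Y *v (axis a p + axis b q)) = p*p*Y$a$a + p*q*(Y$a$b + Y$b$a) + q*q*Y$b$b"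
proof -
  let ?x = "axis a p + axis b q"
  have L1: "\<And>f. (\<Sum>i\<in>UNIV. f i * ?x$i) = f a * p + f b * q"
    using assms by (simp add: axis_def distrib_left sum.distrib sum_if_mult)
  have L2: "\<And>f. (\<Sum>i\<in>UNIV. ?x$i * f i) = p * f a + q * f b"
    using L1 by (simp add: mult.commute)
  have "?x \<bullet> (Y *v ?x) = (\<Sum>i\<in>UNIV. ?x$i * (\<Sum>j\<in>UNIV. Y$i$j * ?x$j))"
    by (simp add: inner_vec_def matrix_vector_mult_def)
  also have "\<dots> = p * (Y$a$a * p + Y$a$b * q) + q * (Y$b$a * p + Y$b$b * q)"
    by (simp only: L1 L2)
  finally show ?thesis by (simp add: algebra_simps)
qed

lemma psd_diag: "psd Y \<Longrightarrow> 0 \<le> (Y::real^'v::finite^'v)$a$a"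
proof -
  assume "psd Y"
  then have "0 \<le> axis a 1 \<bullet> (Y *v axis a 1)" by (simp add: psd_def)
  also have "\<dots> = Y$a$a" by (simp add: inner_vec_def matrix_vector_mult_def axis_def sum_if_mult sum_if_mult')
  finally show ?thesis .
qed

lemma psd_sym: "psd Y \<Longrightarrow> (Y::real^'v::finite^'v)$b$a = Y$a$b"
proof -
  assume "psd Y"
  then have "transpose Y = Y" by (simp add: psd_def)
  then have "(transpose Y)$a$b = Y$a$b" by simp
  then show ?thesis by (simp add: transpose_def)
qed

lemma psd_off:
  assumes "psd (Y::real^'v::finite^'v)"
  shows "\<bar>Y$a$b\<bar> \<le> Y$a$a + Y$b$b"
proof (cases "a = b")
  case True then show ?thesis using psd_diag[OF assms, of b] by simp
next
  case False
  have s: "Y$b$a = Y$a$b" using psd_sym[OF assms] .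
  have "0 \<le> (axis a 1 + axis b 1) \<bullet> (Y *v (axis a 1 + axis b 1))" using assms by (simp add: psd_def)
  then have 1: "0 \<le> Y$a$a + 2*Y$a$b + Y$b$b" using qform2[OF False, of 1 1 Y] s by simp
  have "0 \<le> (axis a 1 + axis b (-1)) \<bullet> (Y *v (axis a 1 + axis b (-1)))" using assms by (simp add: psd_def)
  then have 2: "0 \<le> Y$a$a - 2*Y$a$b + Y$b$b" using qform2[OF False, of 1 "-1" Y] s by simp
  show ?thesis using 1 2 psd_diag[OF assms, of a] psd_diag[OF assms, of b] by linarith
qed

lemma psd_zero:
  assumes "psd (Y::real^'v::finite^'v)" "Y$a$a = 0"
  shows "Y$a$b = 0"
proof (cases "a = b")
  case True then show ?thesis using assms by simp
next
  case False
  have s: "Y$b$a = Y$a$b" using psd_sym[OF assms(1)] .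
  show ?thesis
  proof (rule ccontr)
    assume nz: "Y$a$b \<noteq> 0"
    define l where "l = - (Y$b$b + 1) / (2 * Y$a$b)"
    have "0 \<le> (axis a l + axis b 1) \<bullet> (Y *v (axis a l + axis b 1))" using assms by (simp add: psd_def)
    then have "0 \<le> l*l*Y$a$a + l*(Y$a$b + Y$b$a) + Y$b$b" using qform2[OF False, of l 1 Y] by simp
    also have "\<dots> = -1" using nz assms(2) s by (simp add: l_def field_simps)
    finally show False by simp
  qed
qed



lemma subspace_sym: "subspace (sym_mats :: (real^'v::finite^'v) set)"
  unfolding subspace_def sym_mats_def
  by (auto simp: transpose_def vec_eq_iff)

lemma tr_inner_sum: "tr_inner C X = (\<Sum>a\<in>UNIV. \<Sum>b\<in>UNIV. C$a$b * X$b$a)"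
  by (simp add: tr_inner_def trace_def matrix_matrix_mult_def)

lemma sum_if_ne: fixes f :: "'a::finite \<Rightarrow> real" shows "(\<Sum>a\<in>UNIV. if a \<noteq> k then f a else 0) = (\<Sum>a\<in>UNIV. f a) - f k"
proof -
  have "(\<Sum>a\<in>UNIV. f a) = (\<Sum>a\<in>UNIV. (if a = k then f a else 0) + (if a \<noteq> k then f a else 0))"
    by (rule sum.cong) auto
  also have "\<dots> = f k + (\<Sum>a\<in>UNIV. if a \<noteq> k then f a else 0)" by (simp add: sum.distrib)
  finally show ?thesis by simp
qed

lemma comp_le: "\<bar>(D::real^'v::finite^'v)$a$b\<bar> \<le> norm D"
proof -
  show ?thesis by (rule order_trans[OF component_le_norm_cart Finite_Cartesian_Product.norm_nth_le])
qed

lemma tr_unit: "tr_inner C (unit_proj k) = C$k$k"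
proof -
  have "tr_inner C (unit_proj k) = (\<Sum>a\<in>UNIV. \<Sum>b\<in>UNIV. C$a$b * (if b = k \<and> a = k then 1 else 0))"
    by (simp add: tr_inner_sum unit_proj_def)
  also have "\<dots> = (\<Sum>a\<in>UNIV. if a = k then C$a$k else 0)"
    by (rule sum.cong) (auto simp: sum_if_mult[of "\<lambda>b. C$_$b" k 1, simplified])
  finally show ?thesis by simp
qed

lemma vertex_unit:
  fixes S :: "(real^'v::finite^'v) set" and s :: real
  assumes S: "S \<subseteq> {Y. psd Y \<and> trace Y = 1 \<and> (\<forall>j. j \<noteq> k \<longrightarrow> s * Y$k$j \<le> 0)}"
    and s: "\<bar>s\<bar> = 1" and U: "unit_proj k \<in> S"
  shows "is_vertex S (unit_proj k)"
proof -
  define n where "n = real CARD('v)"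
  define M where "M = 2*n + 1"
  define C0 :: "real^'v^'v" where
    "C0 = (\<chi> a b. if a = k \<and> b = k then M else if a = k \<or> b = k then s else 0)"
  have C0s: "C0 \<in> sym_mats" by (auto simp: sym_mats_def C0_def transpose_def vec_eq_iff)
  have sub: "sym_mats \<inter> ball C0 1 \<subseteq> normal_cone S (unit_proj k)"
  proof
    fix C assume "C \<in> sym_mats \<inter> ball C0 1"
    then have Cs: "C \<in> sym_mats" and nD: "norm (C - C0) < 1" by (auto simp: dist_norm norm_minus_commute)
    have Dle: "\<And>a b. \<bar>C$a$b - C0$a$b\<bar> < 1"
    proof -
      fix a b
      have "\<bar>(C - C0)$a$b\<bar> \<le> norm (C - C0)" by (rule comp_le)
      then show "\<bar>C$a$b - C0$a$b\<bar> < 1" using nD by simp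
    qed
    have "tr_inner C Y \<le> tr_inner C (unit_proj k)" if Y: "Y \<in> S" for Y
    proof -
      have pY: "psd Y" and tY: "trace Y = 1" and sY: "\<And>j. j \<noteq> k \<Longrightarrow> s * Y$k$j \<le> 0"
        using S Y by auto
      have tr: "(\<Sum>a\<in>UNIV. Y$a$a) = 1" using tY by (simp add: trace_def)
      have pt: "C$a$b * Y$b$a \<le> (if a = k \<and> b = k then C$k$k * Y$k$k else 0)
                 + (if a \<noteq> k then Y$a$a else 0) + (if b \<noteq> k then Y$b$b else 0)" for a b
      proof -
        have ya: "Y$b$a = Y$a$b" using psd_sym[OF pY] .
        have da: "0 \<le> Y$a$a" "0 \<le> Y$b$b" using psd_diag[OF pY] by auto
        have Dab: "\<bar>C$a$b - C0$a$b\<bar> < 1" by (rule Dle)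
        have m: "(C$a$b - C0$a$b) * Y$a$b \<le> \<bar>Y$a$b\<bar>"
        proof -
          have "(C$a$b - C0$a$b) * Y$a$b \<le> \<bar>C$a$b - C0$a$b\<bar> * \<bar>Y$a$b\<bar>"
            unfolding abs_mult[symmetric] by (rule abs_ge_self)
          also have "\<dots> \<le> 1 * \<bar>Y$a$b\<bar>" using Dab by (intro mult_right_mono) auto
          finally show ?thesis by simp
        qed
        show ?thesis
        proof (cases "a = k")
          case ak: True
          show ?thesis
          proof (cases "b = k")
            case True then show ?thesis using ak ya by simp
          next
            case bk: False
            have "s * Y$a$b \<le> 0" using sY[OF bk] ak by simp
            then have "s * Y$a$b = - \<bar>Y$a$b\<bar>" using s by (cases "s \<ge> 0") (auto simp: abs_if mult_le_0_iff split: if_splits)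
            moreover have "C0$a$b = s" using ak bk by (simp add: C0_def)
            ultimately have "C$a$b * Y$a$b \<le> 0" using m by (simp add: algebra_simps)
            then show ?thesis using ak bk ya da by simp
          qed
        next
          case ak: False
          show ?thesis
          proof (cases "b = k")
            case bk: True
            have "s * Y$b$a \<le> 0" using sY[OF ak] bk by simp
            then have "s * Y$a$b = - \<bar>Y$a$b\<bar>" using s ya by (cases "s \<ge> 0") (auto simp: abs_if mult_le_0_iff split: if_splits)
            moreover have "C0$a$b = s" using ak bk by (simp add: C0_def)
            ultimately have "C$a$b * Y$a$b \<le> 0" using m by (simp add: algebra_simps)
            then show ?thesis using ak bk ya da by simp
          next
            case bk: False
            have "C0$a$b = 0" using ak bk by (simp add: C0_def)
            then show ?thesis using m ak bk ya psd_off[OF pY, of a b] by simp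
          qed
        qed
      qed
      have "tr_inner C Y \<le> (\<Sum>a\<in>UNIV. \<Sum>b\<in>UNIV. (if a = k \<and> b = k then C$k$k * Y$k$k else 0)
                 + (if a \<noteq> k then Y$a$a else 0) + (if b \<noteq> k then Y$b$b else 0))"
        unfolding tr_inner_sum by (intro sum_mono pt)
      also have "\<dots> = C$k$k * Y$k$k + n * (1 - Y$k$k) + n * (1 - Y$k$k)"
      proof -
        have e1: "(\<Sum>a\<in>UNIV. \<Sum>b\<in>UNIV. (if a = k \<and> b = k then C$k$k * Y$k$k else 0)) = C$k$k * Y$k$k"
        proof -
          have "\<And>a. (\<Sum>b\<in>UNIV. (if a = k \<and> b = k then C$k$k * Y$k$k else 0)) = (if a = k then C$k$k * Y$k$k else 0)"
            by auto
          then show ?thesis by simp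
        qed
        have e2: "(\<Sum>a\<in>UNIV. \<Sum>b::'v\<in>UNIV. (if a \<noteq> k then Y$a$a else 0)) = n * (1 - Y$k$k)"
          using sum_if_ne[of k "\<lambda>a. Y$a$a"] tr by (simp add: n_def sum_distrib_left[symmetric] mult.commute)
        have e3: "(\<Sum>a::'v\<in>UNIV. \<Sum>b\<in>UNIV. (if b \<noteq> k then Y$b$b else 0)) = n * (1 - Y$k$k)"
          using sum_if_ne[of k "\<lambda>a. Y$a$a"] tr by (simp add: n_def)
        show ?thesis using e1 e2 e3 by (simp add: sum.distrib)
      qed
      also have "\<dots> \<le> C$k$k"
      proof -
        have "Y$k$k \<le> 1"
        proof -
          have "0 \<le> (\<Sum>a\<in>UNIV. if a \<noteq> k then Y$a$a else 0)"
            by (intro sum_nonneg) (simp add: psd_diag[OF pY])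
          then show ?thesis using sum_if_ne[of k "\<lambda>a. Y$a$a"] tr by simp
        qed
        moreover have "C$k$k - 2*n \<ge> 0"
          using Dle[of k k] by (simp add: C0_def M_def)
        ultimately have "(C$k$k - 2*n) * (1 - Y$k$k) \<ge> 0" by simp
        then show ?thesis by (simp add: algebra_simps)
      qed
      also have "\<dots> = tr_inner C (unit_proj k)" by (simp add: tr_unit)
      finally show ?thesis .
    qed
    then show "C \<in> normal_cone S (unit_proj k)" using Cs by (auto simp: normal_cone_def)
  qed
  have "aff_dim (sym_mats \<inter> ball C0 1) = aff_dim (sym_mats :: (real^'v^'v) set)"
    by (rule aff_dim_convex_Int_open) (use C0s subspace_sym subspace_imp_convex in auto)
  moreover have "aff_dim (sym_mats \<inter> ball C0 1) \<le> aff_dim (normal_cone S (unit_proj k))"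
    by (rule aff_dim_subset[OF sub])
  moreover have "aff_dim (normal_cone S (unit_proj k)) \<le> aff_dim (sym_mats :: (real^'v^'v) set)"
    by (rule aff_dim_subset) (auto simp: normal_cone_def)
  ultimately have "aff_dim (normal_cone S (unit_proj k)) = aff_dim (sym_mats :: (real^'v^'v) set)"
    by linarith
  then show ?thesis using U unfolding is_vertex_def by blast
qed



lemma quad0:
  fixes b c d :: real
  assumes "d > 0" "\<And>t. \<bar>t\<bar> < d \<Longrightarrow> t*b + t^2*c \<le> 0"
  shows "b = 0"
proof (rule ccontr)
  assume nb: "b \<noteq> 0"
  define e where "e = min (d/2) (\<bar>b\<bar>/(2*(\<bar>c\<bar>+1)))"
  have e0: "e > 0" using nb assms(1) by (simp add: e_def)
  have ed: "e < d" using assms(1) by (simp add: e_def)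
  have eb: "e*(\<bar>c\<bar>+1) \<le> \<bar>b\<bar>/2"
  proof -
    have "e \<le> \<bar>b\<bar>/(2*(\<bar>c\<bar>+1))" by (simp add: e_def)
    then show ?thesis by (simp add: field_simps)
  qed
  define t where "t = sgn b * e"
  have "\<bar>t\<bar> < d" using e0 ed nb by (simp add: t_def abs_mult)
  then have le: "t*b + t^2*c \<le> 0" by (rule assms(2))
  have "t*b = e*\<bar>b\<bar>" by (simp add: t_def abs_sgn mult.commute)
  moreover have "t^2 = e^2" using nb by (simp add: t_def power_mult_distrib sgn_if)
  moreover have "e^2*c \<ge> - (e*(e*\<bar>c\<bar>))"
      proof -
    have "e^2*(-\<bar>c\<bar>) \<le> e^2*c" by (intro mult_left_mono) auto
    then show ?thesis by (simp add: power2_eq_square)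
  qed
  moreover have "e*(e*\<bar>c\<bar>) \<le> e*(\<bar>b\<bar>/2)" using eb e0 by (intro mult_left_mono) (auto simp: algebra_simps)
  ultimately have "t*b + t^2*c \<ge> e*\<bar>b\<bar>/2" by (simp add: algebra_simps)
  moreover have "e*\<bar>b\<bar> > 0" using e0 nb by simp
  ultimately show False using le by linarith
qed

lemma aff_lt:
  fixes N :: "(real^'v::finite^'v) set"
  assumes "N \<subseteq> {C\<in>sym_mats. (\<Sum>a\<in>UNIV. \<Sum>b\<in>UNIV. C$a$b * W$a$b) = 0}"
    and "V \<in> sym_mats" "(\<Sum>a\<in>UNIV. \<Sum>b\<in>UNIV. V$a$b * W$a$b) \<noteq> 0"
  shows "aff_dim N < aff_dim (sym_mats :: (real^'v^'v) set)"
proof -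
  let ?H = "{C\<in>sym_mats. (\<Sum>a\<in>UNIV. \<Sum>b\<in>UNIV. C$a$b * W$a$b) = 0}"
  have sH: "subspace ?H"
  proof -
    have "\<And>x c. (\<Sum>a\<in>UNIV. \<Sum>b\<in>UNIV. (c * x$a$b) * W$a$b) = c * (\<Sum>a\<in>UNIV. \<Sum>b\<in>UNIV. x$a$b * W$a$b)"
      by (simp add: sum_distrib_left mult.assoc)
    moreover have "\<And>x y. (\<Sum>a\<in>UNIV. \<Sum>b\<in>UNIV. (x$a$b + y$a$b) * W$a$b) = (\<Sum>a\<in>UNIV. \<Sum>b\<in>UNIV. x$a$b * W$a$b) + (\<Sum>a\<in>UNIV. \<Sum>b\<in>UNIV. y$a$b * W$a$b)"
      by (simp add: sum.distrib distrib_right)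
    ultimately show ?thesis using subspace_sym unfolding subspace_def by auto
  qed
  have "?H \<subset> sym_mats"
  proof
    show "?H \<subseteq> sym_mats" by blast
    show "?H \<noteq> sym_mats"
    proof
      assume eq: "?H = sym_mats"
      have "V \<in> ?H" using assms(2) by (subst eq)
      then show False using assms(3) by simp
    qed
  qed
  moreover have "span ?H = ?H" by (rule span_eq_iff[THEN iffD2, OF sH])
  moreover have "span sym_mats = (sym_mats :: (real^'v^'v) set)" by (rule span_eq_iff[THEN iffD2, OF subspace_sym])
  ultimately have "span ?H \<subset> span sym_mats" by (simp only:)
  then have "dim ?H < dim (sym_mats :: (real^'v^'v) set)" by (rule dim_psubset)
  moreover have "aff_dim N \<le> aff_dim ?H" using assms(1) by (rule aff_dim_subset)
  ultimately show ?thesis using aff_dim_subspace[OF sH] aff_dim_subspace[OF subspace_sym[where 'v='v]] by simp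
qed

lemma not_vertex_rot:
  fixes S :: "(real^'v::finite^'v) set"
  assumes S: "S = {X. psd X \<and> trace X = 1 \<and> Q X}" and kj: "k \<noteq> j"
    and Qrot: "\<And>Z. (\<forall>a b. Z$a$b \<noteq> 0 \<longrightarrow> a = b \<or> (a = k \<and> b = j) \<or> (a = j \<and> b = k)) \<Longrightarrow> Q Z"
  shows "\<not> is_vertex S (unit_proj k)"
proof
  assume vx: "is_vertex S (unit_proj k)"
  define W :: "real^'v^'v" where "W = (\<chi> a b. if a = k \<and> b = j then 1 else 0)"
  have WC: "(\<Sum>a\<in>UNIV. \<Sum>b\<in>UNIV. C$a$b * W$a$b) = C$k$j" for C :: "real^'v^'v"
  proof -
    have "\<And>a. (\<Sum>b\<in>UNIV. C$a$b * W$a$b) = (if a = k then C$k$j else 0)"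
      using sum_if_mult[of "\<lambda>b. C$k$b" j 1] by (auto simp: W_def)
    then show ?thesis by simp
  qed
  have N: "normal_cone S (unit_proj k) \<subseteq> {C\<in>sym_mats. (\<Sum>a\<in>UNIV. \<Sum>b\<in>UNIV. C$a$b * W$a$b) = 0}"
  proof
    fix C assume C: "C \<in> normal_cone S (unit_proj k)"
    then have Cs: "C \<in> sym_mats" and Cn: "\<And>Y. Y \<in> S \<Longrightarrow> tr_inner C Y \<le> tr_inner C (unit_proj k)"
      by (auto simp: normal_cone_def)
    have Csym: "C$j$k = C$k$j"
    proof -
      have "transpose C = C" using Cs by (simp add: sym_mats_def)
      then have "(transpose C)$k$j = C$k$j" by simp
      then show ?thesis by (simp add: transpose_def)
    qed
    have "t * (2 * C$k$j) + t^2 * (C$j$j - C$k$k) \<le> 0" if "\<bar>t\<bar> < 1" for t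
    proof -
      define v :: "real^'v" where "v = axis k 1 + axis j t"
      have vv: "\<And>a. v$a = (if a = k then 1 else 0) + (if a = j then t else 0)"
        by (simp add: v_def axis_def)
      define q where "q = 1 + t^2"
      have q0: "q > 0" by (simp add: q_def add_pos_nonneg)
      define Y :: "real^'v^'v" where "Y = (\<chi> a b. (1/q) * (v$a * v$b))"
      have YS: "Y \<in> S"
      proof -
        have "psd Y"
          unfolding psd_def
        proof
          show "transpose Y = Y" by (simp add: Y_def transpose_def vec_eq_iff mult.commute)
          show "\<forall>x. 0 \<le> x \<bullet> (Y *v x)"
          proof
            fix x :: "real^'v"
            have "x \<bullet> (Y *v x) = (1/q) * ((\<Sum>a\<in>UNIV. x$a * v$a) * (\<Sum>b\<in>UNIV. x$b * v$b))"
              unfolding qform by (simp add: Y_def sum_product sum_distrib_left mult_ac)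
            also have "\<dots> = (1/q) * (\<Sum>a\<in>UNIV. x$a * v$a)^2" by (simp add: power2_eq_square)
            finally show "0 \<le> x \<bullet> (Y *v x)" using q0 by simp
          qed
        qed
        moreover have "trace Y = 1"
        proof -
          have "trace Y = (1/q) * (\<Sum>a\<in>UNIV. v$a * v$a)"
            by (simp add: trace_def Y_def sum_distrib_left)
          also have "(\<Sum>a\<in>UNIV. v$a * v$a) = 1 + t * t"
          proof -
            have "\<And>a. v$a * v$a = (if a = k then 1 else 0) + (if a = j then t*t else 0)"
              unfolding vv using kj by auto
            then show ?thesis using kj by (simp add: sum.distrib)
          qed
          finally show ?thesis using q0 by (simp add: q_def power2_eq_square)
        qed
        moreover have "Q Y"
          by (rule Qrot) (auto simp: Y_def vv split: if_splits)
        ultimately show ?thesis using S by simp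
      qed
      have "tr_inner C Y = (1/q) * (v \<bullet> (C *v v))"
        unfolding tr_inner_sum qform by (simp add: Y_def sum_distrib_left mult_ac)
      also have "v \<bullet> (C *v v) = C$k$k + t*(C$k$j + C$j$k) + t*t*C$j$j"
        unfolding v_def using qform2[OF kj, of 1 t C] by simp
      finally have "(1/q) * (C$k$k + t*(2*C$k$j) + t*t*C$j$j) \<le> C$k$k"
        using Cn[OF YS] Csym by (simp add: tr_unit)
      then have "C$k$k + t*(2*C$k$j) + t*t*C$j$j \<le> q * C$k$k"
        using q0 by (simp add: field_simps)
      then show ?thesis by (simp add: q_def power2_eq_square algebra_simps)
    qed
    then have "2 * C$k$j = 0" by (intro quad0[of 1]) auto
    then show "C \<in> {C\<in>sym_mats. (\<Sum>a\<in>UNIV. \<Sum>b\<in>UNIV. C$a$b * W$a$b) = 0}" using Cs WC by simp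
  qed
  define V :: "real^'v^'v" where "V = (\<chi> a b. if (a = k \<and> b = j) \<or> (a = j \<and> b = k) then 1 else 0)"
  have Vs: "V \<in> sym_mats" by (auto simp: V_def sym_mats_def transpose_def vec_eq_iff)
  have "(\<Sum>a\<in>UNIV. \<Sum>b\<in>UNIV. V$a$b * W$a$b) = 1" using WC[of V] kj by (simp add: V_def)
  then have "aff_dim (normal_cone S (unit_proj k)) < aff_dim (sym_mats :: (real^'v^'v) set)"
    using aff_lt[OF N Vs] by simp
  then show False using vx by (simp add: is_vertex_def)
qed



lemma not_vertex_scale:
  fixes S :: "(real^'v::finite^'v) set"
  assumes S: "S = {X. psd X \<and> trace X = 1 \<and> Q X}"
    and Qp: "\<And>X r. Q X \<Longrightarrow> (\<forall>a b. r a b > 0) \<Longrightarrow> Q (\<chi> a b. r a b * X$a$b)"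
    and XS: "X \<in> S" and xi: "0 < X$i$i" "X$i$i < 1"
  shows "\<not> is_vertex S X"
proof
  assume vx: "is_vertex S X"
  define x where "x = X$i$i"
  have pX: "psd X" and tX: "trace X = 1" and QX: "Q X" using XS S by auto
  define e :: "'v \<Rightarrow> 'v \<Rightarrow> real" where "e a b = (if a = i then 1 else 0) + (if b = i then 1 else 0)" for a b
  define W :: "real^'v^'v" where "W = (\<chi> a b. X$b$a * e a b - 2 * x * X$b$a)"
  have N: "normal_cone S X \<subseteq> {C\<in>sym_mats. (\<Sum>a\<in>UNIV. \<Sum>b\<in>UNIV. C$a$b * W$a$b) = 0}"
  proof
    fix C assume C: "C \<in> normal_cone S X"
    then have Cs: "C \<in> sym_mats" and Cn: "\<And>Y. Y \<in> S \<Longrightarrow> tr_inner C Y \<le> tr_inner C X"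
      by (auto simp: normal_cone_def)
    define T where "T = tr_inner C X"
    define L1 where "L1 = (\<Sum>a\<in>UNIV. \<Sum>b\<in>UNIV. C$a$b * X$b$a * e a b)"
    define L2 where "L2 = C$i$i * X$i$i"
    have WC: "(\<Sum>a\<in>UNIV. \<Sum>b\<in>UNIV. C$a$b * W$a$b) = L1 - 2 * x * T"
      by (simp add: W_def L1_def T_def tr_inner_sum algebra_simps sum_subtractf sum_distrib_left)
    have "t * (L1 - 2*x*T) + t^2 * (L2 - x*T) \<le> 0" if t: "\<bar>t\<bar> < 1/2" for t
    proof -
      define s where "s a = (if a = i then 1 + t else 1)" for a
      have s0: "s a > 0" for a using t by (auto simp: s_def)
      define q where "q = 1 + (2*t + t^2) * x"
      have q0: "q > 0"
      proof -
        have "(2*t + t^2) \<ge> -1" 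
        proof -
          have "0 \<le> (t+1)*(t+1)" by simp
          then show ?thesis by (simp add: power2_eq_square algebra_simps)
        qed
        then have "(2*t + t^2) * x \<ge> -1 * x" using xi by (intro mult_right_mono) (auto simp: x_def)
        then show ?thesis using xi by (simp add: q_def x_def)
      qed
      define Y :: "real^'v^'v" where "Y = (\<chi> a b. (s a * s b / q) * X$a$b)"
      have pw: "C$a$b * X$b$a * (s b * s a) = C$a$b * X$b$a + t * (C$a$b * X$b$a * e a b)
                       + t^2 * (if a = i \<and> b = i then C$a$b * X$b$a else 0)" for a b
        by (simp add: s_def e_def power2_eq_square algebra_simps)
      have YS: "Y \<in> S"
      proof -
        have "psd Y"
          unfolding psd_def
        proof
          show "transpose Y = Y" using psd_sym[OF pX]
            by (simp add: Y_def transpose_def vec_eq_iff mult.commute)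
          show "\<forall>z. 0 \<le> z \<bullet> (Y *v z)"
          proof
            fix z :: "real^'v"
            define y :: "real^'v" where "y = (\<chi> a. s a * z$a)"
            have "z \<bullet> (Y *v z) = (1/q) * (y \<bullet> (X *v y))"
              unfolding qform by (simp add: Y_def y_def sum_distrib_left mult_ac)
            moreover have "0 \<le> y \<bullet> (X *v y)" using pX by (simp add: psd_def)
            ultimately show "0 \<le> z \<bullet> (Y *v z)" using q0 by simp
          qed
        qed
        moreover have "trace Y = 1"
        proof -
          have "trace Y = (1/q) * (\<Sum>a\<in>UNIV. s a * s a * X$a$a)"
            by (simp add: trace_def Y_def sum_distrib_left)
          also have "(\<Sum>a\<in>UNIV. s a * s a * X$a$a) = (\<Sum>a\<in>UNIV. X$a$a + (if a = i then (2*t+t^2) * X$a$a else 0))"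
            by (rule sum.cong) (auto simp: s_def power2_eq_square algebra_simps)
          also have "\<dots> = q" using tX by (simp add: sum.distrib trace_def q_def x_def)
          finally show ?thesis using q0 by simp
        qed
        moreover have "Q Y" unfolding Y_def by (rule Qp[OF QX]) (use s0 q0 in auto)
        ultimately show ?thesis using S by simp
      qed
      have "q * tr_inner C Y = (\<Sum>a\<in>UNIV. \<Sum>b\<in>UNIV. C$a$b * X$b$a * (s b * s a))"
        unfolding tr_inner_sum using q0 by (simp add: Y_def sum_distrib_left mult_ac)
      also have "\<dots> = (\<Sum>a\<in>UNIV. \<Sum>b\<in>UNIV. C$a$b * X$b$a + t * (C$a$b * X$b$a * e a b)
                       + t^2 * (if a = i \<and> b = i then C$a$b * X$b$a else 0))"
        by (intro sum.cong refl) (rule pw)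
      also have "\<dots> = T + t * L1 + t^2 * L2"
      proof -
        have "(\<Sum>a\<in>UNIV. \<Sum>b\<in>UNIV. (if a = i \<and> b = i then C$a$b * X$b$a else 0)) = L2"
        proof -
          have "\<And>a. (\<Sum>b\<in>UNIV. (if a = i \<and> b = i then C$a$b * X$b$a else 0)) = (if a = i then C$i$i * X$i$i else 0)"
            by auto
          then show ?thesis by (simp add: L2_def)
        qed
        then show ?thesis
          by (simp add: sum.distrib T_def L1_def tr_inner_sum sum_distrib_left[symmetric])
      qed
      finally have eq: "q * tr_inner C Y = T + t * L1 + t^2 * L2" .
      have "q * tr_inner C Y \<le> q * T" using Cn[OF YS] q0 by (simp add: T_def)
      then have "T + t * L1 + t^2 * L2 \<le> (1 + (2*t + t^2) * x) * T" using eq by (simp add: q_def)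
      then show ?thesis by (simp add: algebra_simps power2_eq_square)
    qed
    then have "L1 - 2*x*T = 0" by (intro quad0[of "1/2"]) auto
    then show "C \<in> {C\<in>sym_mats. (\<Sum>a\<in>UNIV. \<Sum>b\<in>UNIV. C$a$b * W$a$b) = 0}" using Cs WC by simp
  qed
  have Vs: "unit_proj i \<in> sym_mats" by (auto simp: unit_proj_def sym_mats_def transpose_def vec_eq_iff)
  have "(\<Sum>a\<in>UNIV. \<Sum>b\<in>UNIV. unit_proj i$a$b * W$a$b) = W$i$i"
  proof -
    have "\<And>a. (\<Sum>b\<in>UNIV. unit_proj i$a$b * W$a$b) = (if a = i then W$i$i else 0)"
      by (auto simp: unit_proj_def sum_if_mult')
    then show ?thesis by simp
  qed
  also have "W$i$i = 2*x - 2*x*x" by (simp add: W_def e_def x_def)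
  also have "\<dots> \<noteq> 0" using xi by (simp add: x_def)
  finally have "aff_dim (normal_cone S X) < aff_dim (sym_mats :: (real^'v^'v) set)"
    using aff_lt[OF N Vs] by simp
  then show False using vx by (simp add: is_vertex_def)
qed



lemma simple_no_loop: "simple_graph E \<Longrightarrow> {a, a} \<notin> E"
  unfolding simple_graph_def by (metis doubleton_eq_iff insert_absorb2)

lemma degree_full:
  fixes E :: "('v::finite) set set"
  assumes "simple_graph E"
  shows "degree E k = CARD('v) - 1 \<longleftrightarrow> (\<forall>j. j \<noteq> k \<longrightarrow> {k, j} \<in> E)"
proof -
  let ?A = "{j. {k, j} \<in> E}"
  have sub: "?A \<subseteq> UNIV - {k}" using simple_no_loop[OF assms, of k] by auto
  have c: "card (UNIV - {k} :: 'v set) = CARD('v) - 1" by (simp add: card_Diff_singleton)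
  show ?thesis
  proof
    assume "degree E k = CARD('v) - 1"
    then have "card ?A = card (UNIV - {k} :: 'v set)" using c by (simp add: degree_def)
    then have "?A = UNIV - {k}" using sub by (intro card_subset_eq) auto
    then show "\<forall>j. j \<noteq> k \<longrightarrow> {k, j} \<in> E" by auto
  next
    assume "\<forall>j. j \<noteq> k \<longrightarrow> {k, j} \<in> E"
    then have "?A = UNIV - {k}" using sub by auto
    then show "degree E k = CARD('v) - 1" using c by (simp add: degree_def)
  qed
qed

lemma diag_cases:
  fixes X :: "real^'v::finite^'v"
  assumes pX: "psd X" and tX: "trace X = 1" and nd: "\<not> (\<exists>i. 0 < X$i$i \<and> X$i$i < 1)"
  shows "\<exists>k. X = unit_proj k"
proof -
  have tr: "(\<Sum>a\<in>UNIV. X$a$a) = 1" using tX by (simp add: trace_def)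
  have "\<exists>i. X$i$i > 0"
  proof (rule ccontr)
    assume "\<not> (\<exists>i. X$i$i > 0)"
    then have "\<And>a. X$a$a \<le> 0" by (simp add: not_less)
    then have "(\<Sum>a\<in>UNIV. X$a$a) \<le> 0" by (simp add: sum_nonpos)
    then show False using tr by simp
  qed
  then obtain i where i: "X$i$i > 0" by blast
  have i1: "X$i$i \<ge> 1" using i nd by force
  have r: "(\<Sum>a\<in>UNIV. if a \<noteq> i then X$a$a else 0) = 1 - X$i$i" using sum_if_ne[of i "\<lambda>a. X$a$a"] tr by simp
  have nn: "\<And>a. 0 \<le> (if a \<noteq> i then X$a$a else 0)" using psd_diag[OF pX] by auto
  have "(\<Sum>a\<in>UNIV. if a \<noteq> i then X$a$a else 0) \<ge> 0" by (intro sum_nonneg nn)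
  then have "(\<Sum>a\<in>UNIV. if a \<noteq> i then X$a$a else 0) = 0" "X$i$i = 1" using r i1 by auto
  then have z: "\<And>a. a \<noteq> i \<Longrightarrow> X$a$a = 0" and xi: "X$i$i = 1"
    using sum_nonneg_eq_0_iff[of UNIV "\<lambda>a. if a \<noteq> i then X$a$a else 0"] nn by (auto split: if_splits)
  have "X = unit_proj i"
  proof -
    have "X$a$b = unit_proj i$a$b" for a b
    proof (cases "a = i")
      case True
      show ?thesis
      proof (cases "b = i")
        case True then show ?thesis using \<open>a = i\<close> xi by (simp add: unit_proj_def)
      next
        case False
        have "X$b$a = 0" by (rule psd_zero[OF pX z[OF False]])
        then show ?thesis using False psd_sym[OF pX, of a b] by (simp add: unit_proj_def)
      qed
    next
      case False
      then show ?thesis using psd_zero[OF pX z[OF False]] by (simp add: unit_proj_def)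
    qed
    then show ?thesis by (simp add: vec_eq_iff)
  qed
  then show ?thesis by blast
qed

lemma unit_psd: "psd (unit_proj k :: real^'v::finite^'v)"
  unfolding psd_def
proof
  show "transpose (unit_proj k) = (unit_proj k :: real^'v^'v)"
    by (auto simp: unit_proj_def transpose_def vec_eq_iff)
  show "\<forall>x. 0 \<le> x \<bullet> (unit_proj k *v x)"
  proof
    fix x :: "real^'v"
    have "\<And>a b. x$a * unit_proj k$a$b * x$b = (if a = k then (if b = k then x$k * x$k else 0) else 0)"
      by (simp add: unit_proj_def)
    then have "\<And>a. (\<Sum>b\<in>UNIV. x$a * unit_proj k$a$b * x$b) = (if a = k then x$k * x$k else 0)"
      by (case_tac "a = k") simp_all
    then have "x \<bullet> (unit_proj k *v x) = x$k * x$k" unfolding qform by simp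
    then show "0 \<le> x \<bullet> (unit_proj k *v x)" by simp
  qed
qed

lemma unit_trace: "trace (unit_proj k :: real^'v::finite^'v) = 1"
proof -
  have "\<And>a. (unit_proj k :: real^'v^'v)$a$a = (if a = k then 1 else 0)" by (simp add: unit_proj_def)
  then show ?thesis by (simp add: trace_def)
qed

lemma vertices_char:
  fixes S :: "(real^'v::finite^'v) set"
  assumes S: "S = {X. psd X \<and> trace X = 1 \<and> Q X}"
    and Qp: "\<And>X r. Q X \<Longrightarrow> (\<forall>a b. r a b > 0) \<Longrightarrow> Q (\<chi> a b. r a b * X$a$b)"
    and yes: "\<And>k. k \<in> R \<Longrightarrow> is_vertex S (unit_proj k)"
    and no: "\<And>k. k \<notin> R \<Longrightarrow> \<not> is_vertex S (unit_proj k)"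
  shows "vertices S = unit_proj ` R"
proof
  show "unit_proj ` R \<subseteq> vertices S" using yes by (auto simp: vertices_def)
  show "vertices S \<subseteq> unit_proj ` R"
  proof
    fix X assume "X \<in> vertices S"
    then have vx: "is_vertex S X" by (simp add: vertices_def)
    then have XS: "X \<in> S" by (simp add: is_vertex_def)
    have "\<not> (\<exists>i. 0 < X$i$i \<and> X$i$i < 1)"
      using not_vertex_scale[OF S Qp XS] vx by blast
    then obtain k where k: "X = unit_proj k" using diag_cases XS S by blast
    then show "X \<in> unit_proj ` R" using no vx by blast
  qed
qed



theorem corollary3p7:
  fixes E :: "('v::finite) set set"
  assumes "simple_graph E"
  defines "P \<equiv> {k. degree E k = CARD('v) - 1}"
  shows
   "vertices {X. psd X \<and> trace X = 1 \<and> (\<forall>i j. {i, j} \<in> E \<longrightarrow> X $ i $ j = 0)}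
      = unit_proj ` P \<and>
    vertices {X. psd X \<and> trace X = 1 \<and> (\<forall>i j. {i, j} \<in> E \<longrightarrow> X $ i $ j = 0)
                 \<and> (\<forall>i j. i \<noteq> j \<and> {i, j} \<notin> E \<longrightarrow> 0 \<le> X $ i $ j)}
      = unit_proj ` UNIV \<and>
    vertices {X. psd X \<and> trace X = 1 \<and> (\<forall>i j. {i, j} \<in> E \<longrightarrow> X $ i $ j \<le> 0)}
      = unit_proj ` P"
proof -
  have Pc: "\<And>k. k \<in> P \<longleftrightarrow> (\<forall>j. j \<noteq> k \<longrightarrow> {k, j} \<in> E)"
    using degree_full[OF assms(1)] by (simp add: P_def)
  have nl: "\<And>a. {a, a} \<notin> E" using simple_no_loop[OF assms(1)] .
  have ue: "\<And>k i j. {i, j} \<in> E \<Longrightarrow> (unit_proj k :: real^'v^'v)$i$j = 0"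
  proof -
    fix k i j assume "{i, j} \<in> E"
    then have "i \<noteq> j" using nl by auto
    then show "(unit_proj k :: real^'v^'v)$i$j = 0" by (auto simp: unit_proj_def)
  qed
  have ug: "\<And>k i j. 0 \<le> (unit_proj k :: real^'v^'v)$i$j" by (simp add: unit_proj_def)
  have rotE: "Z$a$b = (0::real)"
    if "{k, j} \<notin> E" "\<forall>a b. Z$a$b \<noteq> 0 \<longrightarrow> a = b \<or> (a = k \<and> b = j) \<or> (a = j \<and> b = k)" "{a, b} \<in> E"
    for Z :: "real^'v^'v" and k j a b
  proof (rule ccontr)
    assume "Z$a$b \<noteq> 0"
    then have "a = b \<or> (a = k \<and> b = j) \<or> (a = j \<and> b = k)" using that(2) by blast
    then show False using that(1,3) nl by (auto simp: insert_commute)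
  qed
  have notP: "\<And>k. k \<notin> P \<Longrightarrow> \<exists>j. j \<noteq> k \<and> {k, j} \<notin> E" using Pc by blast
  define Q1 where "Q1 = (\<lambda>X::real^'v^'v. \<forall>i j. {i, j} \<in> E \<longrightarrow> X $ i $ j = 0)"
  define Q2 where "Q2 = (\<lambda>X::real^'v^'v. (\<forall>i j. {i, j} \<in> E \<longrightarrow> X $ i $ j = 0)
                 \<and> (\<forall>i j. i \<noteq> j \<and> {i, j} \<notin> E \<longrightarrow> 0 \<le> X $ i $ j))"
  define Q3 where "Q3 = (\<lambda>X::real^'v^'v. \<forall>i j. {i, j} \<in> E \<longrightarrow> X $ i $ j \<le> 0)"
  define S1 where "S1 = {X. psd X \<and> trace X = 1 \<and> Q1 X}"
  define S2 where "S2 = {X. psd X \<and> trace X = 1 \<and> Q2 X}"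
  define S3 where "S3 = {X. psd X \<and> trace X = 1 \<and> Q3 X}"
  have p1: "Q1 (\<chi> a b. r a b * X$a$b)" if "Q1 X" "\<forall>a b. r a b > 0" for X r
    using that by (auto simp: Q1_def)
  have p3: "Q3 (\<chi> a b. r a b * X$a$b)" if "Q3 X" "\<forall>a b. r a b > 0" for X r
  proof -
    have "r i j * X$i$j \<le> 0" if "{i, j} \<in> E" for i j
    proof -
      have "X$i$j \<le> 0" using \<open>Q3 X\<close> that by (simp add: Q3_def)
      moreover have "0 \<le> r i j" using \<open>\<forall>a b. r a b > 0\<close> less_imp_le by blast
      ultimately show ?thesis using mult_nonneg_nonpos by blast
    qed
    then show ?thesis by (simp add: Q3_def)
  qed
  have p2: "Q2 (\<chi> a b. r a b * X$a$b)" if "Q2 X" "\<forall>a b. r a b > 0" for X r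
  proof -
    have "0 \<le> r i j * X$i$j" if "i \<noteq> j" "{i, j} \<notin> E" for i j
      using \<open>Q2 X\<close> \<open>\<forall>a b. r a b > 0\<close> that by (auto simp: Q2_def less_imp_le[THEN mult_nonneg_nonneg] intro!: mult_nonneg_nonneg less_imp_le)
    then show ?thesis using \<open>Q2 X\<close> by (auto simp: Q2_def)
  qed
  have u1: "unit_proj k \<in> S1" for k by (simp add: S1_def Q1_def unit_psd unit_trace ue)
  have u2: "unit_proj k \<in> S2" for k by (simp add: S2_def Q2_def unit_psd unit_trace ue ug)
  have u3: "unit_proj k \<in> S3" for k by (simp add: S3_def Q3_def unit_psd unit_trace ue)
  have 1: "vertices S1 = unit_proj ` P"
  proof (rule vertices_char[OF S1_def p1])
    fix k assume kP: "k \<in> P"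
    show "is_vertex S1 (unit_proj k)"
    proof (rule vertex_unit[where s = 1, OF _ _ u1])
      show "S1 \<subseteq> {Y. psd Y \<and> trace Y = 1 \<and> (\<forall>j. j \<noteq> k \<longrightarrow> 1 * Y$k$j \<le> 0)}"
        using kP by (auto simp: S1_def Q1_def Pc)
    qed simp
  next
    fix k assume "k \<notin> P"
    then obtain j where j: "j \<noteq> k" "{k, j} \<notin> E" using notP by blast
    show "\<not> is_vertex S1 (unit_proj k)"
    proof (rule not_vertex_rot[where j = j and Q = Q1, OF S1_def])
      show "k \<noteq> j" using j by simp
      fix Z :: "real^'v^'v"
      assume "\<forall>a b. Z$a$b \<noteq> 0 \<longrightarrow> a = b \<or> (a = k \<and> b = j) \<or> (a = j \<and> b = k)"
      then show "Q1 Z" unfolding Q1_def using rotE[OF j(2)] by blast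
    qed
  qed
  have 3: "vertices S3 = unit_proj ` P"
  proof (rule vertices_char[OF S3_def p3])
    fix k assume kP: "k \<in> P"
    show "is_vertex S3 (unit_proj k)"
    proof (rule vertex_unit[where s = 1, OF _ _ u3])
      show "S3 \<subseteq> {Y. psd Y \<and> trace Y = 1 \<and> (\<forall>j. j \<noteq> k \<longrightarrow> 1 * Y$k$j \<le> 0)}"
        using kP by (auto simp: S3_def Q3_def Pc)
    qed simp
  next
    fix k assume "k \<notin> P"
    then obtain j where j: "j \<noteq> k" "{k, j} \<notin> E" using notP by blast
    show "\<not> is_vertex S3 (unit_proj k)"
    proof (rule not_vertex_rot[where j = j and Q = Q3, OF S3_def])
      show "k \<noteq> j" using j by simp
      fix Z :: "real^'v^'v"
      assume "\<forall>a b. Z$a$b \<noteq> 0 \<longrightarrow> a = b \<or> (a = k \<and> b = j) \<or> (a = j \<and> b = k)"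
      then show "Q3 Z" unfolding Q3_def using rotE[OF j(2)] by (metis order_refl)
    qed
  qed
  have 2: "vertices S2 = unit_proj ` UNIV"
  proof (rule vertices_char[OF S2_def p2])
    fix k :: 'v
    show "is_vertex S2 (unit_proj k)"
    proof (rule vertex_unit[where s = "-1", OF _ _ u2])
      show "S2 \<subseteq> {Y. psd Y \<and> trace Y = 1 \<and> (\<forall>j. j \<noteq> k \<longrightarrow> -1 * Y$k$j \<le> 0)}"
      proof
        fix Y assume "Y \<in> S2"
        then have Y: "psd Y" "trace Y = 1" "\<And>i j. {i, j} \<in> E \<Longrightarrow> Y $ i $ j = 0"
          "\<And>i j. i \<noteq> j \<Longrightarrow> {i, j} \<notin> E \<Longrightarrow> 0 \<le> Y $ i $ j"
          by (auto simp: S2_def Q2_def)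
        have "0 \<le> Y$k$j" if "j \<noteq> k" for j
        proof (cases "{k, j} \<in> E")
          case True then show ?thesis using Y(3) by simp
        next
          case False then show ?thesis using Y(4) that by simp
        qed
        then show "Y \<in> {Y. psd Y \<and> trace Y = 1 \<and> (\<forall>j. j \<noteq> k \<longrightarrow> -1 * Y$k$j \<le> 0)}"
          using Y(1,2) by simp
      qed
    qed simp
  next
    fix k :: 'v assume "k \<notin> UNIV" then show "\<not> is_vertex S2 (unit_proj k)" by simp
  qed
  have eq1: "{X. psd X \<and> trace X = 1 \<and> (\<forall>i j. {i, j} \<in> E \<longrightarrow> X $ i $ j = 0)} = S1"
    by (simp add: S1_def Q1_def)
  have eq2: "{X. psd X \<and> trace X = 1 \<and> (\<forall>i j. {i, j} \<in> E \<longrightarrow> X $ i $ j = 0)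
                 \<and> (\<forall>i j. i \<noteq> j \<and> {i, j} \<notin> E \<longrightarrow> 0 \<le> X $ i $ j)} = S2"
    by (simp add: S2_def Q2_def)
  have eq3: "{X. psd X \<and> trace X = 1 \<and> (\<forall>i j. {i, j} \<in> E \<longrightarrow> X $ i $ j \<le> 0)} = S3"
    by (simp add: S3_def Q3_def)
  show ?thesis unfolding eq1 eq2 eq3 using 1 2 3 by (intro conjI)
qed

end
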